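(* The elements $z$ and $z'$ are central in $U^+$. Moreover, $U^+$ embeds as a subalgebra into an algebra $V$ in which $e_1$ and $e_3$ are invertible, such that $V$ is isomorphic to the polynomial algebra $\Bbbk_{q^2}[X^{\pm1},Y^{\pm1}][Z,Z']$ in two central commuting indeterminates $Z,Z'$ over the quantum torus $\Bbbk_{q^2}[X^{\pm1},Y^{\pm1}]$ (with $XY=q^2YX$), via $e_3\mapsto X$, $e_1\mapsto Y$, $z\mapsto Z$, $z'\mapsto Z'$; in particular $V$ is generated by $e_3^{\pm1},e_1^{\pm1},z,z'$.
   Context: $\Bbbk$ is an algebraically closed field of characteristic zero and $q\in\Bbbk^\times$ is not a root of unity. $U^+$ is the $\Bbbk$-algebra generated by $e_1,e_2$ with relations (S1) $e_1^2e_2-(q^2+q^{-2})e_1e_2e_1+e_2e_1^2=0$ and (S2) $e_2^3e_1-(q^2+1+q^{-2})e_2^2e_1e_2+(q^2+1+q^{-2})e_2e_1e_2^2-e_1e_2^3=0$. Set $e_3=e_1e_2-q^2e_2e_1$, $z=e_2e_3-q^2e_3e_2$, $w=e_2e_3-e_3e_2$, $z'=e_1w-q^{-4}we_1$. The quantum torus $\Bbbk_{q^2}[X^{\pm1},Y^{\pm1}]$ is the algebra generated by invertible $X,Y$ with $XY=q^2YX$. *)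

theory Defs
  imports "HOL-Library.Poly_Mapping" "HOL-Computational_Algebra.Polynomial"
begin

datatype gen = E1 | E2

text \<open>Words form a monoid under concatenation; we register it as monoid_add
 so that the library's convolution product on finitely supported functions
 (poly_mapping) gives the free associative algebra k<E1,E2> = (finitely supported k-valued functions on words).\<close>

instantiation list :: (type) monoid_add
begin
definition zero_list_def: "0 = []"
definition plus_list_def: "xs + ys = xs @ ys"
instance by standard (auto simp: zero_list_def plus_list_def)
end

type_synonym 'k free = "gen list \<Rightarrow>\<^sub>0 'k"

definition fsc :: "'k::field \<Rightarrow> 'k free" where
  "fsc c = Poly_Mapping.single [] c"

definition fe1 :: "'k::field free" where "fe1 = Poly_Mapping.single [E1] 1"
definition fe2 :: "'k::field free" where "fe2 = Poly_Mapping.single [E2] 1"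

definition fe3 :: "'k::field \<Rightarrow> 'k free" where
  "fe3 q = fe1 * fe2 - fsc (q^2) * fe2 * fe1"
definition fz :: "'k::field \<Rightarrow> 'k free" where
  "fz q = fe2 * fe3 q - fsc (q^2) * fe3 q * fe2"
definition fw :: "'k::field \<Rightarrow> 'k free" where
  "fw q = fe2 * fe3 q - fe3 q * fe2"
definition fz' :: "'k::field \<Rightarrow> 'k free" where
  "fz' q = fe1 * fw q - fsc (inverse q ^ 4) * fw q * fe1"

definition S1 :: "'k::field \<Rightarrow> 'k free" where
  "S1 q = fe1 * fe1 * fe2 - fsc (q^2 + inverse q ^ 2) * fe1 * fe2 * fe1 + fe2 * fe1 * fe1"
definition S2 :: "'k::field \<Rightarrow> 'k free" where
  "S2 q = fe2 * fe2 * fe2 * fe1 - fsc (q^2 + 1 + inverse q ^ 2) * fe2 * fe2 * fe1 * fe2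
        + fsc (q^2 + 1 + inverse q ^ 2) * fe2 * fe1 * fe2 * fe2 - fe1 * fe2 * fe2 * fe2"

text \<open>Two-sided ideal generated by S1, S2; U^+ is the quotient free/Irel.\<close>
inductive_set Irel :: "'k::field \<Rightarrow> 'k free set" for q where
  zero: "0 \<in> Irel q"
| gen: "r \<in> {S1 q, S2 q} \<Longrightarrow> u * r * v \<in> Irel q"
| add: "a \<in> Irel q \<Longrightarrow> b \<in> Irel q \<Longrightarrow> a + b \<in> Irel q"

text \<open>Basis monomials Y^b X^a Z^m Z'^n are indexed by (a,b,m,n).
 Product: (Y^b X^a Z^m Z'^n)(Y^d X^c Z^m' Z'^n') = q^(2ad) Y^(b+d) X^(a+c) Z^(m+m') Z'^(n+n'),
 which encodes XY = q^2 YX with Z, Z' central.\<close>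

type_synonym 'k qalg = "(int \<times> int \<times> nat \<times> nat) \<Rightarrow>\<^sub>0 'k"

fun tw :: "'k::field \<Rightarrow> int \<times> int \<times> nat \<times> nat \<Rightarrow> int \<times> int \<times> nat \<times> nat \<Rightarrow> 'k" where
  "tw q (a, b, m, n) (c, d, m', n') = (q^2) powi (a * d)"

fun kadd :: "int \<times> int \<times> nat \<times> nat \<Rightarrow> int \<times> int \<times> nat \<times> nat \<Rightarrow> int \<times> int \<times> nat \<times> nat" where
  "kadd (a, b, m, n) (c, d, m', n') = (a + c, b + d, m + m', n + n')"

definition amul :: "'k::field \<Rightarrow> 'k qalg \<Rightarrow> 'k qalg \<Rightarrow> 'k qalg" where
  "amul q f g = (\<Sum>s\<in>Poly_Mapping.keys f. \<Sum>t\<in>Poly_Mapping.keys g.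
      Poly_Mapping.single (kadd s t) (Poly_Mapping.lookup f s * Poly_Mapping.lookup g t * tw q s t))"

definition aone :: "'k::field qalg" where "aone = Poly_Mapping.single (0, 0, 0, 0) 1"
definition aX :: "'k::field qalg" where "aX = Poly_Mapping.single (1, 0, 0, 0) 1"
definition aY :: "'k::field qalg" where "aY = Poly_Mapping.single (0, 1, 0, 0) 1"
definition aZ :: "'k::field qalg" where "aZ = Poly_Mapping.single (0, 0, 1, 0) 1"
definition aZ' :: "'k::field qalg" where "aZ' = Poly_Mapping.single (0, 0, 0, 1) 1"

fun gval :: "'k::field qalg \<Rightarrow> gen \<Rightarrow> 'k qalg" where
  "gval a2 E1 = aY"
| "gval a2 E2 = a2"

fun wprod :: "'k::field \<Rightarrow> 'k qalg \<Rightarrow> gen list \<Rightarrow> 'k qalg" where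
  "wprod q a2 [] = aone"
| "wprod q a2 (x # xs) = amul q (gval a2 x) (wprod q a2 xs)"

definition feval :: "'k::field \<Rightarrow> 'k qalg \<Rightarrow> 'k free \<Rightarrow> 'k qalg" where
  "feval q a2 f = (\<Sum>w\<in>Poly_Mapping.keys f.
      amul q (Poly_Mapping.single (0, 0, 0, 0) (Poly_Mapping.lookup f w)) (wprod q a2 w))"

definition alg_closed_field :: "'k::field itself \<Rightarrow> bool" where
  "alg_closed_field _ \<longleftrightarrow> (\<forall>p::'k poly. degree p \<ge> 1 \<longrightarrow> (\<exists>x. poly p x = 0))"

end

theory Submission
  imports Defs
begin


lemma pm_expand:
  "f = (\<Sum>k\<in>Poly_Mapping.keys f. Poly_Mapping.single k (Poly_Mapping.lookup f k))"
proof (rule poly_mapping_eqI)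
  fix x
  show "Poly_Mapping.lookup f x = Poly_Mapping.lookup (\<Sum>k\<in>Poly_Mapping.keys f. Poly_Mapping.single k (Poly_Mapping.lookup f k)) x"
    by (simp add: lookup_sum lookup_single when_def in_keys_iff)
qed

lemma tw_eq: "tw q s t = (q^2) powi (fst s * fst (snd t))"
  by (cases s rule: prod_cases4; cases t rule: prod_cases4) simp

lemma amul_superset:
  assumes "finite A" "Poly_Mapping.keys f \<subseteq> A" "finite B" "Poly_Mapping.keys g \<subseteq> B"
  shows "amul q f g = (\<Sum>s\<in>A. \<Sum>t\<in>B. Poly_Mapping.single (kadd s t)
           (Poly_Mapping.lookup f s * Poly_Mapping.lookup g t * tw q s t))"
proof -
  have 1: "(\<Sum>t\<in>Poly_Mapping.keys g. Poly_Mapping.single (kadd s t)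
           (Poly_Mapping.lookup f s * Poly_Mapping.lookup g t * tw q s t)) =
        (\<Sum>t\<in>B. Poly_Mapping.single (kadd s t)
           (Poly_Mapping.lookup f s * Poly_Mapping.lookup g t * tw q s t))" for s
    by (rule sum.mono_neutral_left) (use assms in \<open>auto simp: in_keys_iff\<close>)
  have 2: "(\<Sum>s\<in>Poly_Mapping.keys f. \<Sum>t\<in>B. Poly_Mapping.single (kadd s t)
           (Poly_Mapping.lookup f s * Poly_Mapping.lookup g t * tw q s t)) =
        (\<Sum>s\<in>A. \<Sum>t\<in>B. Poly_Mapping.single (kadd s t)
           (Poly_Mapping.lookup f s * Poly_Mapping.lookup g t * tw q s t))"
    by (rule sum.mono_neutral_left) (use assms in \<open>auto simp: in_keys_iff\<close>)
  show ?thesis unfolding amul_def 1 2 ..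
qed

lemma amul_add_left: "amul q (f + g) h = amul q f h + amul q g h"
proof -
  let ?A = "Poly_Mapping.keys f \<union> Poly_Mapping.keys g"
  have k: "Poly_Mapping.keys (f + g) \<subseteq> ?A" by (rule keys_add)
  show ?thesis
    apply (subst amul_superset[where A = ?A and B = "Poly_Mapping.keys h"], auto simp: k)+
    apply (simp add: lookup_add distrib_right single_add sum.distrib)
    done
qed

lemma amul_add_right: "amul q h (f + g) = amul q h f + amul q h g"
proof -
  let ?A = "Poly_Mapping.keys f \<union> Poly_Mapping.keys g"
  have k: "Poly_Mapping.keys (f + g) \<subseteq> ?A" by (rule keys_add)
  show ?thesis
    apply (subst amul_superset[where B = ?A and A = "Poly_Mapping.keys h"], auto simp: k)+
    apply (simp add: lookup_add distrib_right distrib_left single_add sum.distrib)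
    done
qed

lemma amul_zero_left[simp]: "amul q 0 h = 0" by (simp add: amul_def)
lemma amul_zero_right[simp]: "amul q h 0 = 0" by (simp add: amul_def)

lemma amul_minus_left: "amul q (- f) h = - amul q f h"
  using amul_add_left[of q f "-f" h] by (simp add: eq_neg_iff_add_eq_0 add.commute)
lemma amul_minus_right: "amul q h (- f) = - amul q h f"
  using amul_add_right[of q h f "-f"] by (simp add: eq_neg_iff_add_eq_0 add.commute)
lemma amul_diff_left: "amul q (f - g) h = amul q f h - amul q g h"
  using amul_add_left[of q f "-g" h] by (simp add: amul_minus_left)
lemma amul_diff_right: "amul q h (f - g) = amul q h f - amul q h g"
  using amul_add_right[of q h f "-g"] by (simp add: amul_minus_right)

lemma amul_sum_left: "amul q (\<Sum>i\<in>I. f i) h = (\<Sum>i\<in>I. amul q (f i) h)"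
  by (induction I rule: infinite_finite_induct) (auto simp: amul_add_left)
lemma amul_sum_right: "amul q h (\<Sum>i\<in>I. f i) = (\<Sum>i\<in>I. amul q h (f i))"
  by (induction I rule: infinite_finite_induct) (auto simp: amul_add_right)

lemma amul_single_single:
  "amul q (Poly_Mapping.single s a) (Poly_Mapping.single t b) = Poly_Mapping.single (kadd s t) (a * b * tw q s t)"
  by (subst amul_superset[where A = "{s}" and B = "{t}"]) auto

context fixes q :: "'k::field" assumes q0: "q \<noteq> 0"
begin

lemma amul_assoc_single:
  "amul q (amul q (Poly_Mapping.single s a) (Poly_Mapping.single t b)) (Poly_Mapping.single u c) =
   amul q (Poly_Mapping.single s a) (amul q (Poly_Mapping.single t b) (Poly_Mapping.single u c))"
proof -
  obtain s1 s2 s3 s4 where s: "s = (s1,s2,s3,s4)" by (cases s rule: prod_cases4)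
  obtain t1 t2 t3 t4 where t: "t = (t1,t2,t3,t4)" by (cases t rule: prod_cases4)
  obtain u1 u2 u3 u4 where u: "u = (u1,u2,u3,u4)" by (cases u rule: prod_cases4)
  have Q: "(q^2) powi (m+n) = (q^2) powi m * (q^2) powi n" for m n
    by (rule power_int_add) (simp add: q0)
  show ?thesis
    by (simp add: s t u amul_single_single algebra_simps Q)
qed

lemma amul_assoc: "amul q (amul q f g) h = amul q f (amul q g h)"
proof -
  have "amul q (amul q (\<Sum>s\<in>Poly_Mapping.keys f. Poly_Mapping.single s (Poly_Mapping.lookup f s))
          (\<Sum>s\<in>Poly_Mapping.keys g. Poly_Mapping.single s (Poly_Mapping.lookup g s)))
          (\<Sum>s\<in>Poly_Mapping.keys h. Poly_Mapping.single s (Poly_Mapping.lookup h s)) =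
        amul q (\<Sum>s\<in>Poly_Mapping.keys f. Poly_Mapping.single s (Poly_Mapping.lookup f s))
          (amul q (\<Sum>s\<in>Poly_Mapping.keys g. Poly_Mapping.single s (Poly_Mapping.lookup g s))
          (\<Sum>s\<in>Poly_Mapping.keys h. Poly_Mapping.single s (Poly_Mapping.lookup h s)))"
    by (simp only: amul_sum_left amul_sum_right amul_assoc_single)
  then show ?thesis by (simp only: pm_expand[symmetric])
qed


end

lemma amul_unit_single: "amul q aone (Poly_Mapping.single t b) = Poly_Mapping.single t b"
  "amul q (Poly_Mapping.single t b) aone = Poly_Mapping.single t b"
  by (cases t rule: prod_cases4; simp add: aone_def amul_single_single)+

lemma amul_one_left[simp]: "amul q aone f = f"
proof -
  have "amul q aone (\<Sum>s\<in>Poly_Mapping.keys f. Poly_Mapping.single s (Poly_Mapping.lookup f s)) =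
    (\<Sum>s\<in>Poly_Mapping.keys f. Poly_Mapping.single s (Poly_Mapping.lookup f s))"
    by (simp only: amul_sum_right amul_unit_single)
  then show ?thesis by (simp only: pm_expand[symmetric])
qed

lemma amul_one_right[simp]: "amul q f aone = f"
proof -
  have "amul q (\<Sum>s\<in>Poly_Mapping.keys f. Poly_Mapping.single s (Poly_Mapping.lookup f s)) aone =
    (\<Sum>s\<in>Poly_Mapping.keys f. Poly_Mapping.single s (Poly_Mapping.lookup f s))"
    by (simp only: amul_sum_left amul_unit_single)
  then show ?thesis by (simp only: pm_expand[symmetric])
qed

lemma central_single:
  "amul q (Poly_Mapping.single (0,0,m,n) c) (Poly_Mapping.single t b) =
   amul q (Poly_Mapping.single t b) (Poly_Mapping.single (0,0,m,n) c)"
  by (cases t rule: prod_cases4) (simp add: amul_single_single algebra_simps)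

lemma amul_central: "amul q (Poly_Mapping.single (0,0,m,n) c) f = amul q f (Poly_Mapping.single (0,0,m,n) c)"
proof -
  have "amul q (Poly_Mapping.single (0,0,m,n) c) (\<Sum>s\<in>Poly_Mapping.keys f. Poly_Mapping.single s (Poly_Mapping.lookup f s)) =
    amul q (\<Sum>s\<in>Poly_Mapping.keys f. Poly_Mapping.single s (Poly_Mapping.lookup f s)) (Poly_Mapping.single (0,0,m,n) c)"
    by (simp only: amul_sum_right amul_sum_left central_single)
  then show ?thesis by (simp only: pm_expand[symmetric])
qed

lemma scal_scal: "amul q (Poly_Mapping.single (0,0,0,0) a) (Poly_Mapping.single (0,0,0,0) b) =
   Poly_Mapping.single (0,0,0,0) (a * b)"
  by (simp add: amul_single_single)

lemma feval_superset:
  assumes "finite A" "Poly_Mapping.keys f \<subseteq> A"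
  shows "feval q a2 f = (\<Sum>w\<in>A. amul q (Poly_Mapping.single (0, 0, 0, 0) (Poly_Mapping.lookup f w)) (wprod q a2 w))"
  unfolding feval_def
  by (rule sum.mono_neutral_left) (use assms in \<open>auto simp: in_keys_iff\<close>)

lemma feval_add: "feval q a2 (f + g) = feval q a2 f + feval q a2 g"
proof -
  let ?A = "Poly_Mapping.keys f \<union> Poly_Mapping.keys g"
  have k: "Poly_Mapping.keys (f + g) \<subseteq> ?A" by (rule keys_add)
  show ?thesis
    apply (subst feval_superset[where A = ?A], auto simp: k)+
    apply (simp add: lookup_add single_add amul_add_left sum.distrib)
    done
qed

lemma feval_zero[simp]: "feval q a2 0 = 0" by (simp add: feval_def)

lemma feval_minus: "feval q a2 (- f) = - feval q a2 f"
  using feval_add[of q a2 f "-f"] by (simp add: eq_neg_iff_add_eq_0 add.commute)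
lemma feval_diff: "feval q a2 (f - g) = feval q a2 f - feval q a2 g"
  using feval_add[of q a2 f "-g"] by (simp add: feval_minus)
lemma feval_sum: "feval q a2 (\<Sum>i\<in>I. f i) = (\<Sum>i\<in>I. feval q a2 (f i))"
  by (induction I rule: infinite_finite_induct) (auto simp: feval_add)

lemma feval_single: "feval q a2 (Poly_Mapping.single w c) = amul q (Poly_Mapping.single (0,0,0,0) c) (wprod q a2 w)"
  by (subst feval_superset[where A = "{w}"]) auto

lemma free_one: "(1::'a::field free) = Poly_Mapping.single [] 1"
  by (metis single_one zero_list_def)

lemma feval_one[simp]: "feval q a2 1 = aone"
  by (simp add: free_one feval_single) (simp add: aone_def)

context fixes q :: "'k::field" assumes q0: "q \<noteq> 0"
begin

lemma wprod_append: "wprod q a2 (v @ w) = amul q (wprod q a2 v) (wprod q a2 w)"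
  by (induction v) (auto simp: amul_assoc[OF q0])

lemma feval_mult_single:
  "feval q a2 (Poly_Mapping.single v a * Poly_Mapping.single w b) =
   amul q (feval q a2 (Poly_Mapping.single v a)) (feval q a2 (Poly_Mapping.single w b))"
proof -
  let ?s = "\<lambda>c. Poly_Mapping.single (0::int,0::int,0::nat,0::nat) c"
  let ?V = "wprod q a2 v" and ?W = "wprod q a2 w"
  have "amul q (amul q (?s a) ?V) (amul q (?s b) ?W) = amul q (?s a) (amul q ?V (amul q (?s b) ?W))"
    by (simp add: amul_assoc[OF q0])
  also have "amul q ?V (amul q (?s b) ?W) = amul q (amul q ?V (?s b)) ?W"
    by (simp add: amul_assoc[OF q0])
  also have "amul q ?V (?s b) = amul q (?s b) ?V" by (simp add: amul_central)
  also have "amul q (?s a) (amul q (amul q (?s b) ?V) ?W) = amul q (amul q (?s a) (?s b)) (amul q ?V ?W)"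
    by (simp add: amul_assoc[OF q0])
  also have "amul q (?s a) (?s b) = ?s (a*b)" by (rule scal_scal)
  finally show ?thesis
    by (simp add: mult_single feval_single plus_list_def wprod_append)
qed

lemma feval_mult: "feval q a2 (f * g) = amul q (feval q a2 f) (feval q a2 g)"
proof -
  have "feval q a2 ((\<Sum>s\<in>Poly_Mapping.keys f. Poly_Mapping.single s (Poly_Mapping.lookup f s)) *
          (\<Sum>s\<in>Poly_Mapping.keys g. Poly_Mapping.single s (Poly_Mapping.lookup g s))) =
        amul q (feval q a2 (\<Sum>s\<in>Poly_Mapping.keys f. Poly_Mapping.single s (Poly_Mapping.lookup f s)))
          (feval q a2 (\<Sum>s\<in>Poly_Mapping.keys g. Poly_Mapping.single s (Poly_Mapping.lookup g s)))"
    by (simp only: sum_product feval_sum amul_sum_left amul_sum_right feval_mult_single) (rule sum.swap)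
  then show ?thesis by (simp only: pm_expand[symmetric])
qed

lemma feval_pow: "feval q a2 (f ^ n) = (amul q (feval q a2 f) ^^ n) aone"
  by (induction n) (auto simp: feval_mult)

end


lemma single_mult_assoc: "Poly_Mapping.single k a * (Poly_Mapping.single l b * z) =
   Poly_Mapping.single (k + l) (a * b) * z"
  by (simp add: mult.assoc[symmetric] mult_single)

lemma fsc_mult: "fsc a * fsc b = fsc (a * b)"
  by (simp add: fsc_def mult_single plus_list_def)
lemma fsc_add: "fsc (a + b) = fsc a + fsc b" by (simp add: fsc_def single_add)
lemma fsc_1[simp]: "fsc 1 = 1" by (simp add: fsc_def free_one)
lemma fsc_0[simp]: "fsc 0 = 0" by (simp add: fsc_def)

lemma fsc_comm_single: "Poly_Mapping.single w a * fsc c = fsc c * Poly_Mapping.single w a"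
  by (simp add: fsc_def mult_single plus_list_def mult.commute)

lemma fsc_comm: "x * fsc c = fsc c * x"
proof -
  have "(\<Sum>k\<in>Poly_Mapping.keys x. Poly_Mapping.single k (Poly_Mapping.lookup x k)) * fsc c =
     fsc c * (\<Sum>k\<in>Poly_Mapping.keys x. Poly_Mapping.single k (Poly_Mapping.lookup x k))"
    by (simp add: sum_distrib_left sum_distrib_right fsc_comm_single)
  then show ?thesis by (simp only: pm_expand[symmetric])
qed

lemmas wsimps = fe3_def fz_def fw_def fz'_def S1_def S2_def fe1_def fe2_def fsc_def
  algebra_simps single_mult_assoc mult_single plus_list_def

context fixes q :: "'k::field" assumes q0: "q \<noteq> 0"
begin

lemma Id1: "S1 q = fe1 * fe3 q - fsc (inverse q ^ 2) * fe3 q * fe1"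
  apply (rule poly_mapping_eqI)
  apply (simp add: wsimps lookup_add lookup_minus lookup_single when_def)
  apply (auto simp: field_simps q0)
  done

lemma Id2: "S2 q = fsc (- (inverse q ^ 2)) * (fe2 * fz q - fz q * fe2)"
  apply (rule poly_mapping_eqI)
  apply (simp add: wsimps lookup_add lookup_minus lookup_single when_def)
  apply (auto simp: field_simps q0)
  done

lemma Id3: "fe1 * fz q - fz q * fe1 = fsc (q^2) * (fe2 * S1 q - S1 q * fe2)"
  apply (rule poly_mapping_eqI)
  apply (simp add: wsimps lookup_add lookup_minus lookup_single when_def)
  apply (auto simp: field_simps q0)
  done

lemma Id4: "fe2 * fe1 = fsc (inverse q ^ 2) * fe1 * fe2 - fsc (inverse q ^ 2) * fe3 q"
  apply (rule poly_mapping_eqI)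
  apply (simp add: wsimps lookup_add lookup_minus lookup_single when_def)
  apply (auto simp: field_simps q0)
  done

lemma Id5: "fe2 * fe3 q = fsc (q^2) * fe3 q * fe2 + fz q"
  by (simp add: fz_def)

end


lemma I_lmul: "a \<in> Irel q \<Longrightarrow> x * a \<in> Irel q"
proof (induction a rule: Irel.induct)
  case zero then show ?case by (simp add: Irel.zero)
next
  case (gen r u v)
  have "x * (u * r * v) = (x * u) * r * v" by (simp add: mult.assoc)
  then show ?case using gen Irel.gen by metis
next
  case (add a b) then show ?case by (simp add: distrib_left Irel.add)
qed

lemma I_rmul: "a \<in> Irel q \<Longrightarrow> a * x \<in> Irel q"
proof (induction a rule: Irel.induct)
  case zero then show ?case by (simp add: Irel.zero)
next
  case (gen r u v)
  have "(u * r * v) * x = u * r * (v * x)" by (simp add: mult.assoc)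
  then show ?case using gen Irel.gen by metis
next
  case (add a b) then show ?case by (simp add: distrib_right Irel.add)
qed

lemma I_neg: "a \<in> Irel q \<Longrightarrow> - a \<in> Irel q"
  using I_lmul[of a q "-1"] by simp

lemma I_diff: "a \<in> Irel q \<Longrightarrow> b \<in> Irel q \<Longrightarrow> a - b \<in> Irel q"
  by (metis Irel.add I_neg diff_conv_add_uminus)

lemma I_S1: "S1 q \<in> Irel q" using Irel.gen[of "S1 q" q 1 1] by simp
lemma I_S2: "S2 q \<in> Irel q" using Irel.gen[of "S2 q" q 1 1] by simp

definition cg :: "'k::field \<Rightarrow> 'k free \<Rightarrow> 'k free \<Rightarrow> bool" where
  "cg q a b \<longleftrightarrow> a - b \<in> Irel q"

lemma cg_refl[simp]: "cg q a a" by (simp add: cg_def Irel.zero)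
lemma cg_sym: "cg q a b \<Longrightarrow> cg q b a"
  unfolding cg_def using I_neg by fastforce
lemma cg_trans[trans]: "cg q a b \<Longrightarrow> cg q b c \<Longrightarrow> cg q a c"
  unfolding cg_def using Irel.add by fastforce
lemma cg_add: "cg q a b \<Longrightarrow> cg q c d \<Longrightarrow> cg q (a + c) (b + d)"
  unfolding cg_def using Irel.add by (fastforce simp: algebra_simps)
lemma cg_diff: "cg q a b \<Longrightarrow> cg q c d \<Longrightarrow> cg q (a - c) (b - d)"
  unfolding cg_def using I_diff by (fastforce simp: algebra_simps)
lemma cg_lmul: "cg q a b \<Longrightarrow> cg q (x * a) (x * b)"
  unfolding cg_def using I_lmul by (fastforce simp: algebra_simps)
lemma cg_rmul: "cg q a b \<Longrightarrow> cg q (a * x) (b * x)"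
  unfolding cg_def using I_rmul by (fastforce simp: algebra_simps)
lemma cg_mul: "cg q a b \<Longrightarrow> cg q c d \<Longrightarrow> cg q (a * c) (b * d)"
  by (meson cg_lmul cg_rmul cg_trans)

definition zc :: "'k::field \<Rightarrow> 'k free \<Rightarrow> bool" where
  "zc q x \<longleftrightarrow> cg q (fz q * x) (x * fz q)"

lemma zc_mult: "zc q x \<Longrightarrow> zc q y \<Longrightarrow> zc q (x * y)"
  unfolding zc_def
proof -
  assume x: "cg q (fz q * x) (x * fz q)" and y: "cg q (fz q * y) (y * fz q)"
  have "cg q (fz q * x * y) (x * fz q * y)" using cg_rmul[OF x] .
  also have "cg q (x * fz q * y) (x * (y * fz q))" using cg_lmul[OF y] by (simp add: mult.assoc)
  finally show "cg q (fz q * (x * y)) (x * y * fz q)" by (simp add: mult.assoc)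
qed

lemma zc_add: "zc q x \<Longrightarrow> zc q y \<Longrightarrow> zc q (x + y)"
  unfolding zc_def using cg_add by (fastforce simp: algebra_simps)
lemma zc_diff: "zc q x \<Longrightarrow> zc q y \<Longrightarrow> zc q (x - y)"
  unfolding zc_def using cg_diff by (fastforce simp: algebra_simps)
lemma zc_fsc: "zc q (fsc c)" unfolding zc_def by (simp add: fsc_comm)
lemma zc_one: "zc q 1" unfolding zc_def by simp
lemma zc_pow: "zc q x \<Longrightarrow> zc q (x ^ n)"
  by (induction n) (auto simp: zc_one zc_mult)
lemma zc_powz: "zc q x \<Longrightarrow> cg q (fz q ^ n * x) (x * fz q ^ n)"
proof (induction n)
  case 0 then show ?case by simp
next
  case (Suc n)
  have "cg q (fz q * (fz q ^ n * x)) (fz q * (x * fz q ^ n))" using cg_lmul[OF Suc.IH[OF Suc.prems]] .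
  also have "cg q (fz q * (x * fz q ^ n)) (x * fz q * fz q ^ n)"
    using cg_rmul[OF Suc.prems[unfolded zc_def]] by (simp add: mult.assoc)
  finally show ?case by (simp add: mult.assoc power_commutes)
qed

lemma fsc_neg: "fsc (- c) = - fsc c" by (simp add: fsc_def single_uminus)

context fixes q :: "'k::field" assumes q0: "q \<noteq> 0"
begin

lemma zc_e1: "zc q fe1"
proof -
  have "fe1 * fz q - fz q * fe1 \<in> Irel q"
    unfolding Id3[OF q0] by (intro I_lmul I_diff I_rmul I_S1)
  then show ?thesis unfolding zc_def cg_def using I_neg by fastforce
qed

lemma zc_e2: "zc q fe2"
proof -
  have c: "q^2 * - (inverse q ^ 2) = -1" by (simp add: q0 field_simps)
  have "fsc (q^2) * S2 q = fsc (q^2 * - (inverse q ^ 2)) * (fe2 * fz q - fz q * fe2)"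
    unfolding Id2[OF q0] by (simp only: mult.assoc[symmetric] fsc_mult)
  also have "\<dots> = fz q * fe2 - fe2 * fz q" unfolding c fsc_neg by simp
  finally have "fz q * fe2 - fe2 * fz q = fsc (q^2) * S2 q" ..
  then show ?thesis unfolding zc_def cg_def by (simp add: I_lmul I_S2)
qed

lemma zc_e3: "zc q (fe3 q)"
  unfolding fe3_def by (intro zc_diff zc_mult zc_e1 zc_e2 zc_fsc)

lemma cg31: "cg q (fe3 q * fe1) (fsc (q^2) * fe1 * fe3 q)"
proof -
  have c: "- (q^2) * inverse q ^ 2 = -1" by (simp add: q0 field_simps)
  have "fsc (- (q^2)) * S1 q = fsc (- (q^2)) * (fe1 * fe3 q) - fsc (- (q^2) * inverse q ^ 2) * (fe3 q * fe1)"
    unfolding Id1[OF q0] by (simp only: right_diff_distrib mult.assoc[symmetric] fsc_mult)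
  also have "\<dots> = fe3 q * fe1 - fsc (q^2) * fe1 * fe3 q"
    unfolding c fsc_neg by (simp add: mult.assoc)
  finally have "fe3 q * fe1 - fsc (q^2) * fe1 * fe3 q = fsc (- (q^2)) * S1 q" ..
  then show ?thesis unfolding cg_def by (simp add: I_lmul I_S1)
qed

end


definition MM :: "'k::field \<Rightarrow> nat \<Rightarrow> nat \<Rightarrow> nat \<Rightarrow> nat \<Rightarrow> 'k free" where
  "MM q a b m n = fe1 ^ a * (fe3 q ^ b * (fz q ^ m * fe2 ^ n))"

inductive_set Sp :: "'k::field \<Rightarrow> 'k free set" for q where
  mon: "MM q a b m n \<in> Sp q"
| zero: "0 \<in> Sp q"
| add: "f \<in> Sp q \<Longrightarrow> g \<in> Sp q \<Longrightarrow> f + g \<in> Sp q"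
| scal: "f \<in> Sp q \<Longrightarrow> fsc c * f \<in> Sp q"
| cgr: "f \<in> Sp q \<Longrightarrow> cg q g f \<Longrightarrow> g \<in> Sp q"

lemma Sp_neg: "f \<in> Sp q \<Longrightarrow> - f \<in> Sp q"
  using Sp.scal[of f q "-1"] by (simp add: fsc_neg)
lemma Sp_diff: "f \<in> Sp q \<Longrightarrow> g \<in> Sp q \<Longrightarrow> f - g \<in> Sp q"
  unfolding diff_conv_add_uminus by (intro Sp.add Sp_neg)
lemma Sp_sum: "(\<And>i. i \<in> I \<Longrightarrow> f i \<in> Sp q) \<Longrightarrow> (\<Sum>i\<in>I. f i) \<in> Sp q"
  by (induction I rule: infinite_finite_induct) (auto intro: Sp.zero Sp.add)

lemma Sp_lmul_gen:
  assumes x: "\<And>a b m n. x * MM q a b m n \<in> Sp q" and f: "f \<in> Sp q"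
  shows "x * f \<in> Sp q"
  using f
proof (induction f rule: Sp.induct)
  case (mon a b m n) then show ?case by (rule x)
next
  case zero then show ?case by (simp add: Sp.zero)
next
  case (add f g) then show ?case by (simp add: distrib_left Sp.add)
next
  case (scal f c)
  have "x * (fsc c * f) = fsc c * (x * f)" by (simp add: mult.assoc[symmetric] fsc_comm)
  then show ?case using Sp.scal[OF scal.IH] by simp
next
  case (cgr f g) then show ?case using Sp.cgr[OF cgr.IH cg_lmul[OF cgr.hyps(2)]] by simp
qed

lemma Sp_e1: "f \<in> Sp q \<Longrightarrow> fe1 * f \<in> Sp q"
proof (rule Sp_lmul_gen)
  show "fe1 * MM q a b m n \<in> Sp q" for a b m n
    using Sp.mon[of q "Suc a" b m n] by (simp add: MM_def mult.assoc)
qed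

lemma Sp_scal_e1pow: "f \<in> Sp q \<Longrightarrow> fe1 ^ a * f \<in> Sp q"
  by (induction a) (auto simp: mult.assoc Sp_e1)

context fixes q :: "'k::field" assumes q0: "q \<noteq> 0"
begin

lemma Sp_z: "f \<in> Sp q \<Longrightarrow> fz q * f \<in> Sp q"
proof (rule Sp_lmul_gen)
  fix a b m n
  have zx: "zc q (fe1 ^ a * fe3 q ^ b)"
    by (intro zc_mult zc_pow zc_e1[OF q0] zc_e3[OF q0])
  have "cg q (fz q * (fe1 ^ a * fe3 q ^ b) * (fz q ^ m * fe2 ^ n)) ((fe1 ^ a * fe3 q ^ b) * fz q * (fz q ^ m * fe2 ^ n))"
    using cg_rmul[OF zx[unfolded zc_def]] .
  moreover have "(fe1 ^ a * fe3 q ^ b) * fz q * (fz q ^ m * fe2 ^ n) = MM q a b (Suc m) n"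
    by (simp add: MM_def mult.assoc)
  moreover have "fz q * MM q a b m n = fz q * (fe1 ^ a * fe3 q ^ b) * (fz q ^ m * fe2 ^ n)"
    by (simp add: MM_def mult.assoc)
  ultimately have "cg q (fz q * MM q a b m n) (MM q a b (Suc m) n)" by simp
  then show "fz q * MM q a b m n \<in> Sp q" by (rule Sp.cgr[OF Sp.mon])
qed

lemma Sp_e3_mon: "fe3 q * MM q a b m n \<in> Sp q"
proof (induction a)
  case 0
  show ?case using Sp.mon[of q 0 "Suc b" m n] by (simp add: MM_def mult.assoc)
next
  case (Suc a)
  have "cg q ((fe3 q * fe1) * MM q a b m n) ((fsc (q^2) * fe1 * fe3 q) * MM q a b m n)"
    by (rule cg_rmul[OF cg31[OF q0]])
  moreover have "(fe3 q * fe1) * MM q a b m n = fe3 q * MM q (Suc a) b m n"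
    by (simp add: MM_def mult.assoc)
  moreover have "(fsc (q^2) * fe1 * fe3 q) * MM q a b m n = fsc (q^2) * (fe1 * (fe3 q * MM q a b m n))"
    by (simp add: mult.assoc)
  moreover have "fsc (q^2) * (fe1 * (fe3 q * MM q a b m n)) \<in> Sp q"
    by (intro Sp.scal Sp_e1 Suc)
  ultimately show ?case using Sp.cgr[of "fsc (q^2) * (fe1 * (fe3 q * MM q a b m n))" q "fe3 q * MM q (Suc a) b m n"]
    by simp
qed

lemma Sp_e3: "f \<in> Sp q \<Longrightarrow> fe3 q * f \<in> Sp q"
  by (rule Sp_lmul_gen) (rule Sp_e3_mon)

lemma Sp_e2_mon0: "fe2 * MM q 0 b m n \<in> Sp q"
proof (induction b)
  case 0
  have "cg q (fz q ^ m * fe2) (fe2 * fz q ^ m)" by (rule zc_powz[OF zc_e2[OF q0]])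
  then have "cg q (fe2 * fz q ^ m * fe2 ^ n) (fz q ^ m * fe2 * fe2 ^ n)"
    by (rule cg_rmul[OF cg_sym])
  moreover have "fz q ^ m * fe2 * fe2 ^ n = MM q 0 0 m (Suc n)" by (simp add: MM_def mult.assoc)
  moreover have "fe2 * fz q ^ m * fe2 ^ n = fe2 * MM q 0 0 m n" by (simp add: MM_def mult.assoc)
  ultimately have "cg q (fe2 * MM q 0 0 m n) (MM q 0 0 m (Suc n))" by simp
  then show ?case by (rule Sp.cgr[OF Sp.mon])
next
  case (Suc b)
  have "fe2 * MM q 0 (Suc b) m n = (fe2 * fe3 q) * MM q 0 b m n"
    by (simp add: MM_def mult.assoc)
  also have "\<dots> = fsc (q^2) * (fe3 q * (fe2 * MM q 0 b m n)) + fz q * MM q 0 b m n"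
    unfolding Id5[OF q0] by (simp add: distrib_right mult.assoc)
  moreover have "fsc (q^2) * (fe3 q * (fe2 * MM q 0 b m n)) + fz q * MM q 0 b m n \<in> Sp q"
    by (intro Sp.add Sp.scal Sp_e3 Sp_z Suc Sp.mon)
  ultimately show ?case by simp
qed

lemma Sp_e2_mon: "fe2 * MM q a b m n \<in> Sp q"
proof (induction a)
  case 0 then show ?case by (rule Sp_e2_mon0)
next
  case (Suc a)
  have "fe2 * MM q (Suc a) b m n = (fe2 * fe1) * MM q a b m n"
    by (simp add: MM_def mult.assoc)
  also have "\<dots> = fsc (inverse q ^ 2) * (fe1 * (fe2 * MM q a b m n)) - fsc (inverse q ^ 2) * (fe3 q * MM q a b m n)"
    unfolding Id4[OF q0] by (simp add: left_diff_distrib mult.assoc)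
  moreover have "fsc (inverse q ^ 2) * (fe1 * (fe2 * MM q a b m n)) - fsc (inverse q ^ 2) * (fe3 q * MM q a b m n) \<in> Sp q"
    by (intro Sp_diff Sp.scal Sp_e3 Sp_e1 Suc Sp.mon)
  ultimately show ?case by simp
qed

lemma Sp_e2: "f \<in> Sp q \<Longrightarrow> fe2 * f \<in> Sp q"
  by (rule Sp_lmul_gen) (rule Sp_e2_mon)

lemma Sp_word: "Poly_Mapping.single w 1 \<in> Sp q"
proof (induction w)
  case Nil
  show ?case using Sp.mon[of q 0 0 0 0] by (simp add: MM_def free_one[symmetric])
next
  case (Cons x w)
  have "Poly_Mapping.single (x # w) 1 = Poly_Mapping.single [x] 1 * Poly_Mapping.single w (1::'k)"
    by (simp add: mult_single plus_list_def)
  then show ?case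
    by (cases x) (auto simp: fe1_def[symmetric] fe2_def[symmetric] intro: Sp_e1 Sp_e2 Cons)
qed

lemma Sp_all: "f \<in> Sp q"
proof -
  have "(\<Sum>k\<in>Poly_Mapping.keys f. fsc (Poly_Mapping.lookup f k) * Poly_Mapping.single k 1) \<in> Sp q"
    by (intro Sp_sum Sp.scal Sp_word)
  moreover have "fsc c * Poly_Mapping.single k 1 = Poly_Mapping.single k c" for c :: 'k and k
    by (simp add: fsc_def mult_single plus_list_def)
  ultimately show ?thesis by (subst pm_expand) simp
qed

end


definition ca1 :: "'k::field \<Rightarrow> 'k" where "ca1 q = inverse (1 - q^4)"
definition ca2 :: "'k::field \<Rightarrow> 'k" where "ca2 q = inverse (1 - q^2)"
definition ca3 :: "'k::field \<Rightarrow> 'k" where "ca3 q = inverse ((q^2 - 1) * inverse (q^2) * (1 - inverse q ^ 4))"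

definition a2v :: "'k::field \<Rightarrow> 'k qalg" where
  "a2v q = Poly_Mapping.single (1,-1,0,0) (ca1 q) + Poly_Mapping.single (-1,0,1,0) (ca2 q)
         + Poly_Mapping.single (-1,-1,0,1) (ca3 q)"

lemma feval_fsc: "feval q a2 (fsc c) = Poly_Mapping.single (0,0,0,0) c"
  by (simp add: fsc_def feval_single aone_def amul_single_single)
lemma feval_e1: "feval q a2 fe1 = aY"
  by (simp add: fe1_def feval_single aY_def aone_def amul_single_single)
lemma feval_e2: "feval q a2 fe2 = a2"
  by (simp add: fe2_def feval_single aone_def) (metis aone_def amul_one_left amul_one_right)

lemma pm_eq4: "(\<And>a b m n. Poly_Mapping.lookup f (a,b,m,n) = Poly_Mapping.lookup g (a,b,m,n)) \<Longrightarrow> f = g"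
  by (rule poly_mapping_eqI) (metis prod_cases4)

context fixes q :: "'k::field" assumes q0: "q \<noteq> 0" and q2: "q^2 \<noteq> 1" and q4: "q^4 \<noteq> 1"
begin

lemma nz: "1 - q^4 \<noteq> 0" "1 - q^2 \<noteq> 0" "q^4 - 1 \<noteq> 0" "q^2 - 1 \<noteq> 0"
   "q^4 \<noteq> 1" "1 \<noteq> q^4" "q^2 \<noteq> 1" "1 \<noteq> q^2"
  using q2 q4 by auto

lemmas vsimps = feval_mult[OF q0] feval_diff feval_add feval_fsc feval_e1 feval_e2 a2v_def aX_def aY_def
  aZ_def aZ'_def amul_add_left amul_add_right amul_diff_left amul_diff_right amul_single_single
  fe3_def fz_def fw_def fz'_def

lemma ev_e3: "feval q (a2v q) (fe3 q) = aX"
  apply (rule pm_eq4)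
  apply (simp add: vsimps fe3_def lookup_add lookup_minus lookup_single when_def)
  apply (auto simp: ca1_def ca2_def ca3_def field_simps q0 nz)
  done

lemma ev_z: "feval q (a2v q) (fz q) = aZ"
  apply (rule pm_eq4)
  apply (simp add: fz_def feval_mult[OF q0] feval_diff feval_fsc ev_e3 feval_e2)
  apply (simp add: vsimps lookup_add lookup_minus lookup_single when_def)
  apply (auto simp: ca1_def ca2_def ca3_def field_simps q0 nz)
  done

lemma fw_alt: "fw q = fz q + fsc (q^2 - 1) * fe3 q * fe2"
  apply (rule poly_mapping_eqI)
  by (simp add: wsimps lookup_add lookup_minus lookup_single when_def)

lemma ev_fw: "feval q (a2v q) (fw q) = Poly_Mapping.single (2,-1,0,0) ((q^2-1) * inverse (q^2) * ca1 q)
   + Poly_Mapping.single (0,-1,0,1) ((q^2-1) * inverse (q^2) * ca3 q)"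
  apply (rule pm_eq4)
  apply (simp add: fw_alt feval_mult[OF q0] feval_add feval_fsc ev_e3 ev_z feval_e2)
  apply (simp add: vsimps lookup_add lookup_minus lookup_single when_def)
  apply (auto simp: ca1_def ca2_def ca3_def field_simps q0 nz)
  done

lemma den: "q^2 + q^8 - (q^4 + q^6) \<noteq> 0" "q ^ 6 + q ^ 12 - (q ^ 8 + q ^ 10) \<noteq> 0"
proof -
  have e: "q^2 + q^8 - (q^4 + q^6) = q^2 * ((q^2 - 1) * (q^4 - 1))" by (simp add: algebra_simps)
  show "q^2 + q^8 - (q^4 + q^6) \<noteq> 0" unfolding e using nz q0 by simp
  have e2: "q ^ 6 + q ^ 12 - (q ^ 8 + q ^ 10) = q^6 * ((q^2 - 1) * (q^4 - 1))" by (simp add: algebra_simps)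
  show "q ^ 6 + q ^ 12 - (q ^ 8 + q ^ 10) \<noteq> 0" unfolding e2 using nz q0 by simp
qed

lemma K1: "inverse q ^ 4 * q ^ 4 = 1"
  using q0 by (simp add: power_inverse[symmetric] field_simps)

lemma K2: "(q^2 - 1) * inverse (q^2) * ca3 q - inverse q ^ 4 * ((q^2 - 1) * inverse (q^2) * ca3 q) = 1"
proof -
  let ?B = "(q^2 - 1) * inverse (q^2) * (1 - inverse q ^ 4)"
  have n1: "q^2 - 1 \<noteq> 0" using nz by auto
  have n2: "1 - inverse q ^ 4 \<noteq> 0"
  proof
    assume "1 - inverse q ^ 4 = 0"
    then have "inverse q ^ 4 = 1" by simp
    then have "q ^ 4 = 1" by (metis inverse_1 inverse_inverse_eq power_inverse)
    then show False using nz by simp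
  qed
  have B: "?B \<noteq> 0" using n1 n2 q0 by simp
  have "(q^2 - 1) * inverse (q^2) * ca3 q - inverse q ^ 4 * ((q^2 - 1) * inverse (q^2) * ca3 q) = ?B * inverse ?B"
  proof -
    have "(q^2 - 1) * inverse (q^2) * ca3 q - inverse q ^ 4 * ((q^2 - 1) * inverse (q^2) * ca3 q) = ?B * ca3 q"
      by (simp add: algebra_simps)
    then show ?thesis unfolding ca3_def .
  qed
  also have "\<dots> = 1" by (rule right_inverse[OF B])
  finally show ?thesis .
qed

lemma ev_z': "feval q (a2v q) (fz' q) = aZ'"
  apply (rule pm_eq4)
  apply (simp add: fz'_def feval_mult[OF q0] feval_diff feval_fsc ev_fw feval_e1)
  apply (simp add: vsimps lookup_add lookup_minus lookup_single when_def)
  apply (auto simp: q0 nz K1 K2)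
  done

end


definition dk :: "int \<times> int \<times> nat \<times> nat \<Rightarrow> nat" where "dk k = snd (snd (snd k))"

lemma dk_kadd: "dk (kadd s t) = dk s + dk t"
  by (cases s rule: prod_cases4; cases t rule: prod_cases4) (simp add: dk_def)

lemma keys_amul: "Poly_Mapping.keys (amul q f g) \<subseteq> {kadd s t | s t. s \<in> Poly_Mapping.keys f \<and> t \<in> Poly_Mapping.keys g}"
proof
  fix k assume k: "k \<in> Poly_Mapping.keys (amul q f g)"
  let ?G = "\<lambda>s t. Poly_Mapping.single (kadd s t) (Poly_Mapping.lookup f s * Poly_Mapping.lookup g t * tw q s t)"
  have "k \<in> (\<Union>s\<in>Poly_Mapping.keys f. Poly_Mapping.keys (\<Sum>t\<in>Poly_Mapping.keys g. ?G s t))"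
    using k keys_sum[of "\<lambda>s. \<Sum>t\<in>Poly_Mapping.keys g. ?G s t" "Poly_Mapping.keys f"]
    unfolding amul_def by (rule subsetD[rotated])
  then obtain s where s: "s \<in> Poly_Mapping.keys f" and ks: "k \<in> Poly_Mapping.keys (\<Sum>t\<in>Poly_Mapping.keys g. ?G s t)"
    by (rule UN_E)
  have "k \<in> (\<Union>t\<in>Poly_Mapping.keys g. Poly_Mapping.keys (?G s t))"
    using ks keys_sum[of "?G s" "Poly_Mapping.keys g"] by (rule subsetD[rotated])
  then obtain t where t: "t \<in> Poly_Mapping.keys g" and kt: "k \<in> Poly_Mapping.keys (?G s t)"
    by (rule UN_E)
  from kt have "k = kadd s t" by (simp split: if_splits)
  with s t show "k \<in> {kadd s t | s t. s \<in> Poly_Mapping.keys f \<and> t \<in> Poly_Mapping.keys g}" by blast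
qed

lemma amul_bound1:
  assumes "\<forall>s\<in>Poly_Mapping.keys f. dk s \<le> p" "\<forall>t\<in>Poly_Mapping.keys g. dk t < r"
  shows "\<forall>k\<in>Poly_Mapping.keys (amul q f g). dk k < p + r"
proof
  fix k assume "k \<in> Poly_Mapping.keys (amul q f g)"
  then obtain s t where k: "k = kadd s t" and st: "s \<in> Poly_Mapping.keys f" "t \<in> Poly_Mapping.keys g"
    using keys_amul[of q f g] by blast
  have "dk s \<le> p \<or> dk s < p" "dk t < r \<or> dk t \<le> r" using assms st by auto
  show "dk k < p + r" unfolding k dk_kadd using assms st by (meson add_less_le_mono add_le_less_mono)
qed

lemma amul_bound2:
  assumes "\<forall>s\<in>Poly_Mapping.keys f. dk s < p" "\<forall>t\<in>Poly_Mapping.keys g. dk t \<le> r"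
  shows "\<forall>k\<in>Poly_Mapping.keys (amul q f g). dk k < p + r"
proof
  fix k assume "k \<in> Poly_Mapping.keys (amul q f g)"
  then obtain s t where k: "k = kadd s t" and st: "s \<in> Poly_Mapping.keys f" "t \<in> Poly_Mapping.keys g"
    using keys_amul[of q f g] by blast
  have "dk s \<le> p \<or> dk s < p" "dk t < r \<or> dk t \<le> r" using assms st by auto
  show "dk k < p + r" unfolding k dk_kadd using assms st by (meson add_less_le_mono add_le_less_mono)
qed

definition shape :: "nat \<Rightarrow> int \<times> int \<times> nat \<times> nat \<Rightarrow> 'k::field \<Rightarrow> 'k qalg \<Rightarrow> bool" where
  "shape n k c f \<longleftrightarrow> c \<noteq> 0 \<and> (\<forall>t\<in>Poly_Mapping.keys (f - Poly_Mapping.single k c). dk t < n)"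

lemma lookup_scal: "Poly_Mapping.lookup (amul q (Poly_Mapping.single (0,0,0,0) c) f) k = c * Poly_Mapping.lookup f k"
proof -
  have e: "amul q (Poly_Mapping.single (0,0,0,0) c) (Poly_Mapping.single t b) = Poly_Mapping.single t (c * b)" for t b
    by (cases t rule: prod_cases4) (simp add: amul_single_single)
  have "amul q (Poly_Mapping.single (0,0,0,0) c) (\<Sum>t\<in>Poly_Mapping.keys f. Poly_Mapping.single t (Poly_Mapping.lookup f t))
     = (\<Sum>t\<in>Poly_Mapping.keys f. Poly_Mapping.single t (c * Poly_Mapping.lookup f t))"
    by (simp add: amul_sum_right e)
  then have "amul q (Poly_Mapping.single (0,0,0,0) c) f = (\<Sum>t\<in>Poly_Mapping.keys f. Poly_Mapping.single t (c * Poly_Mapping.lookup f t))"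
    by (simp only: pm_expand[symmetric])
  then show ?thesis
    by (simp add: lookup_sum lookup_single when_def in_keys_iff)
qed

context fixes q :: "'k::field" assumes q0: "q \<noteq> 0" and q2: "q^2 \<noteq> 1" and q4: "q^4 \<noteq> 1"
begin

lemma tw_nz: "tw q s t \<noteq> 0"
  by (cases s rule: prod_cases4; cases t rule: prod_cases4) (simp add: q0)

lemma ca3_nz: "ca3 q \<noteq> 0"
proof -
  have n1: "q^2 - 1 \<noteq> 0" using q2 by auto
  have n2: "1 - inverse q ^ 4 \<noteq> 0"
  proof
    assume "1 - inverse q ^ 4 = 0"
    then have "inverse q ^ 4 = 1" by simp
    then have "q ^ 4 = 1" by (metis inverse_1 inverse_inverse_eq power_inverse)
    then show False using q4 by simp
  qed
  show ?thesis unfolding ca3_def using n1 n2 q0 by simp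
qed

lemma shape_lmul:
  assumes sh: "shape n t c f" and d: "dk s = 0"
  shows "shape n (kadd s t) (c * tw q s t) (amul q (Poly_Mapping.single s 1) f)"
proof -
  let ?R = "f - Poly_Mapping.single t c"
  have f: "f = Poly_Mapping.single t c + ?R" by simp
  have "amul q (Poly_Mapping.single s 1) f = Poly_Mapping.single (kadd s t) (c * tw q s t) + amul q (Poly_Mapping.single s 1) ?R"
    by (subst f, simp only: amul_add_right amul_single_single) simp
  then have e: "amul q (Poly_Mapping.single s 1) f - Poly_Mapping.single (kadd s t) (c * tw q s t) = amul q (Poly_Mapping.single s 1) ?R"
    by simp
  have "\<forall>k\<in>Poly_Mapping.keys (amul q (Poly_Mapping.single s 1) ?R). dk k < 0 + n"
    by (rule amul_bound1) (use sh d in \<open>auto simp: shape_def\<close>)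
  then show ?thesis using sh tw_nz unfolding shape_def e by simp
qed

lemma a2pow: "\<exists>c. shape n (- int n, - int n, 0, n) c ((amul q (a2v q) ^^ n) aone)"
proof (induction n)
  case 0
  show ?case by (rule exI[of _ 1]) (simp add: shape_def aone_def)
next
  case (Suc n)
  then obtain c where sh: "shape n (- int n, - int n, 0, n) c ((amul q (a2v q) ^^ n) aone)" by blast
  let ?f = "(amul q (a2v q) ^^ n) aone"
  let ?t = "(- int n, - int n, 0::nat, n)"
  let ?s3 = "(-1::int, -1::int, 0::nat, 1::nat)"
  let ?R = "?f - Poly_Mapping.single ?t c"
  let ?A = "Poly_Mapping.single (1::int,-1::int,0::nat,0::nat) (ca1 q) + Poly_Mapping.single (-1,0,1,0) (ca2 q)"
  have a2: "a2v q = ?A + Poly_Mapping.single ?s3 (ca3 q)" by (simp add: a2v_def)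
  have f: "?f = Poly_Mapping.single ?t c + ?R" by simp
  have "amul q (a2v q) ?f = amul q (Poly_Mapping.single ?s3 (ca3 q)) (Poly_Mapping.single ?t c)
      + (amul q (Poly_Mapping.single ?s3 (ca3 q)) ?R + amul q ?A ?f)"
    apply (subst a2, subst amul_add_left)
    apply (subst (2) f, subst amul_add_right)
    apply (simp add: algebra_simps)
    done
  also have "amul q (Poly_Mapping.single ?s3 (ca3 q)) (Poly_Mapping.single ?t c) =
     Poly_Mapping.single (- int (Suc n), - int (Suc n), 0, Suc n) (ca3 q * c * tw q ?s3 ?t)"
    by (simp add: amul_single_single)
  finally have e: "amul q (a2v q) ?f - Poly_Mapping.single (- int (Suc n), - int (Suc n), 0, Suc n) (ca3 q * c * tw q ?s3 ?t)
      = amul q (Poly_Mapping.single ?s3 (ca3 q)) ?R + amul q ?A ?f" by simp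
  have b1: "\<forall>k\<in>Poly_Mapping.keys (amul q (Poly_Mapping.single ?s3 (ca3 q)) ?R). dk k < 1 + n"
    by (rule amul_bound1) (use sh in \<open>auto simp: shape_def dk_def\<close>)
  have fk: "\<forall>k\<in>Poly_Mapping.keys ?f. dk k \<le> n"
  proof
    fix k assume k: "k \<in> Poly_Mapping.keys ?f"
    have "k \<in> Poly_Mapping.keys (Poly_Mapping.single ?t c) \<union> Poly_Mapping.keys ?R"
      using k keys_add[of "Poly_Mapping.single ?t c" ?R] f by auto
    then show "dk k \<le> n" using sh by (force simp: shape_def dk_def split: if_splits)
  qed
  have ak: "\<forall>k\<in>Poly_Mapping.keys ?A. dk k < 1"
    using keys_add[of "Poly_Mapping.single (1::int,-1::int,0::nat,0::nat) (ca1 q)" "Poly_Mapping.single (-1,0,1,0) (ca2 q)"]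
    by (force simp: dk_def split: if_splits)
  have b2: "\<forall>k\<in>Poly_Mapping.keys (amul q ?A ?f). dk k < 1 + n"
    by (rule amul_bound2[OF ak fk])
  have "\<forall>k\<in>Poly_Mapping.keys (amul q (Poly_Mapping.single ?s3 (ca3 q)) ?R + amul q ?A ?f). dk k < Suc n"
    using b1 b2 keys_add[of "amul q (Poly_Mapping.single ?s3 (ca3 q)) ?R" "amul q ?A ?f"] by fastforce
  moreover have "ca3 q * c * tw q ?s3 ?t \<noteq> 0" using ca3_nz tw_nz[of ?s3 ?t] sh by (simp only: shape_def mult_eq_0_iff) simp
  ultimately have "shape (Suc n) (- int (Suc n), - int (Suc n), 0, Suc n) (ca3 q * c * tw q ?s3 ?t) (amul q (a2v q) ?f)"
    unfolding shape_def e by simp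
  then show ?case by auto
qed

end


definition MMt :: "'k::field \<Rightarrow> nat \<times> nat \<times> nat \<times> nat \<Rightarrow> 'k free" where
  "MMt q i = (case i of (a, b, m, n) \<Rightarrow> MM q a b m n)"

definition keyM :: "nat \<times> nat \<times> nat \<times> nat \<Rightarrow> int \<times> int \<times> nat \<times> nat" where
  "keyM i = (case i of (a, b, m, n) \<Rightarrow> (int b - int n, int a - int n, m, n))"

definition nn :: "nat \<times> nat \<times> nat \<times> nat \<Rightarrow> nat" where "nn i = snd (snd (snd i))"

lemma keyM_inj: "keyM i = keyM j \<Longrightarrow> i = j"
  by (cases i rule: prod_cases4; cases j rule: prod_cases4) (auto simp: keyM_def)

lemma dk_keyM: "dk (keyM i) = nn i"
  by (cases i rule: prod_cases4) (simp add: keyM_def dk_def nn_def)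

lemma shape_lookup:
  assumes "shape n k c f" "n \<le> dk k'"
  shows "Poly_Mapping.lookup f k' = (if k' = k then c else 0)"
proof -
  let ?R = "f - Poly_Mapping.single k c"
  have "Poly_Mapping.lookup ?R k' = 0"
  proof (rule ccontr)
    assume "Poly_Mapping.lookup ?R k' \<noteq> 0"
    then have "k' \<in> Poly_Mapping.keys ?R" by (simp add: in_keys_iff)
    then show False using assms by (auto simp: shape_def)
  qed
  then show ?thesis by (simp add: lookup_minus lookup_single when_def split: if_splits)
qed

lemma powY: "(amul q aY ^^ a) aone = Poly_Mapping.single (0, int a, 0, 0) 1"
  by (induction a) (simp_all add: aone_def aY_def amul_single_single)
lemma powX: "(amul q aX ^^ b) aone = Poly_Mapping.single (int b, 0, 0, 0) 1"
  by (induction b) (simp_all add: aone_def aX_def amul_single_single)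
lemma powZ: "(amul q aZ ^^ m) aone = Poly_Mapping.single (0, 0, m, 0) 1"
  by (induction m) (simp_all add: aone_def aZ_def amul_single_single)

lemma Sp_repr: "f \<in> Sp q \<Longrightarrow> \<exists>S c. finite S \<and> cg q f (\<Sum>i\<in>S. fsc (c i) * MMt q i)"
proof (induction f rule: Sp.induct)
  case (mon a b m n)
  show ?case
    by (rule exI[of _ "{(a,b,m,n)}"], rule exI[of _ "\<lambda>_. 1"]) (simp add: MMt_def)
next
  case zero
  show ?case by (rule exI[of _ "{}"]) simp
next
  case (add f g)
  then obtain S1 c1 S2 c2 where 1: "finite S1" "cg q f (\<Sum>i\<in>S1. fsc (c1 i) * MMt q i)"
    and 2: "finite S2" "cg q g (\<Sum>i\<in>S2. fsc (c2 i) * MMt q i)" by blast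
  let ?c1 = "\<lambda>i. if i \<in> S1 then c1 i else 0" and ?c2 = "\<lambda>i. if i \<in> S2 then c2 i else 0"
  have e1: "(\<Sum>i\<in>S1 \<union> S2. fsc (?c1 i) * MMt q i) = (\<Sum>i\<in>S1. fsc (c1 i) * MMt q i)"
    by (rule sum.mono_neutral_cong_right) (use 1 2 in auto)
  have e2: "(\<Sum>i\<in>S1 \<union> S2. fsc (?c2 i) * MMt q i) = (\<Sum>i\<in>S2. fsc (c2 i) * MMt q i)"
    by (rule sum.mono_neutral_cong_right) (use 1 2 in auto)
  have "(\<Sum>i\<in>S1 \<union> S2. fsc (?c1 i + ?c2 i) * MMt q i) = (\<Sum>i\<in>S1. fsc (c1 i) * MMt q i) + (\<Sum>i\<in>S2. fsc (c2 i) * MMt q i)"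
    unfolding e1[symmetric] e2[symmetric] by (simp add: fsc_add distrib_right sum.distrib)
  then show ?case using 1 2 cg_add[OF 1(2) 2(2)]
    by (intro exI[of _ "S1 \<union> S2"] exI[of _ "\<lambda>i. ?c1 i + ?c2 i"]) simp
next
  case (scal f c)
  then obtain S c1 where 1: "finite S" "cg q f (\<Sum>i\<in>S. fsc (c1 i) * MMt q i)" by blast
  have "fsc c * (\<Sum>i\<in>S. fsc (c1 i) * MMt q i) = (\<Sum>i\<in>S. fsc (c * c1 i) * MMt q i)"
    by (simp add: sum_distrib_left mult.assoc[symmetric] fsc_mult)
  then show ?case using 1 cg_lmul[OF 1(2), of "fsc c"]
    by (intro exI[of _ S] exI[of _ "\<lambda>i. c * c1 i"]) simp
next
  case (cgr f g)
  then show ?case using cg_trans by blast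
qed

context fixes q :: "'k::field" assumes q0: "q \<noteq> 0" and q2: "q^2 \<noteq> 1" and q4: "q^4 \<noteq> 1"
begin

lemma shapeM: "\<exists>c. shape (nn i) (keyM i) c (feval q (a2v q) (MMt q i))"
proof -
  obtain a b m n where i: "i = (a,b,m,n)" by (cases i rule: prod_cases4)
  obtain c where c: "shape n (- int n, - int n, 0, n) c ((amul q (a2v q) ^^ n) aone)"
    using a2pow[OF q0 q2 q4] by blast
  have f: "feval q (a2v q) (MMt q i) = amul q (Poly_Mapping.single (0, int a, 0, 0) 1)
     (amul q (Poly_Mapping.single (int b, 0, 0, 0) 1) (amul q (Poly_Mapping.single (0, 0, m, 0) 1)
     ((amul q (a2v q) ^^ n) aone)))"
    by (simp add: i MMt_def MM_def feval_mult[OF q0] feval_pow[OF q0] feval_e1 feval_e2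
        ev_e3[OF q0 q2 q4] ev_z[OF q0 q2 q4] powY powX powZ)
  have "shape n (kadd (0, int a, 0, 0) (kadd (int b, 0, 0, 0) (kadd (0, 0, m, 0) (- int n, - int n, 0, n))))
     (c * tw q (0, 0, m, 0) (- int n, - int n, 0, n) * tw q (int b, 0, 0, 0) (kadd (0, 0, m, 0) (- int n, - int n, 0, n))
        * tw q (0, int a, 0, 0) (kadd (int b, 0, 0, 0) (kadd (0, 0, m, 0) (- int n, - int n, 0, n))))
     (feval q (a2v q) (MMt q i))"
    unfolding f by (intro shape_lmul[OF q0 q2 q4] c) (simp_all add: dk_def)
  then show ?thesis by (auto simp: i keyM_def nn_def)
qed

lemma indep:
  assumes fin: "finite S"
    and sum0: "(\<Sum>i\<in>S. amul q (Poly_Mapping.single (0,0,0,0) (c i)) (feval q (a2v q) (MMt q i))) = 0"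
  shows "\<forall>i\<in>S. c i = 0"
proof (rule ccontr)
  assume "\<not> (\<forall>i\<in>S. c i = 0)"
  then have ne: "{i\<in>S. c i \<noteq> 0} \<noteq> {}" by blast
  have fin': "finite {i\<in>S. c i \<noteq> 0}" using fin by simp
  let ?N = "Max (nn ` {i\<in>S. c i \<noteq> 0})"
  have "?N \<in> nn ` {i\<in>S. c i \<noteq> 0}" using fin' ne by (intro Max_in) auto
  then obtain i0 where i0a: "?N = nn i0" and i0b: "i0 \<in> {i\<in>S. c i \<noteq> 0}" by (rule imageE)
  have i0: "i0 \<in> {i\<in>S. c i \<noteq> 0}" "nn i0 = ?N" using i0a i0b by auto
  have le: "nn i \<le> ?N" if "i \<in> S" "c i \<noteq> 0" for i
    using fin' that by (intro Max_ge) auto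
  let ?F = "\<lambda>i. feval q (a2v q) (MMt q i)"
  have trm: "c i * Poly_Mapping.lookup (?F i) (keyM i0) = (if i = i0 then c i0 * Poly_Mapping.lookup (?F i0) (keyM i0) else 0)"
    if i: "i \<in> S" for i
  proof (cases "i = i0")
    case True then show ?thesis by simp
  next
    case False
    show ?thesis
    proof (cases "c i = 0")
      case True then show ?thesis using False by simp
    next
      case ci: False
      obtain k where k: "shape (nn i) (keyM i) k (?F i)" using shapeM by blast
      have "nn i \<le> dk (keyM i0)" using le[OF i ci] i0 by (simp add: dk_keyM)
      have "keyM i0 \<noteq> keyM i" using False keyM_inj by metis
      with shape_lookup[OF k \<open>nn i \<le> dk (keyM i0)\<close>] have "Poly_Mapping.lookup (?F i) (keyM i0) = 0"
        by simp
      then show ?thesis using False by simp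
    qed
  qed
  have "0 = Poly_Mapping.lookup (\<Sum>i\<in>S. amul q (Poly_Mapping.single (0,0,0,0) (c i)) (?F i)) (keyM i0)"
    using sum0 by simp
  also have "\<dots> = (\<Sum>i\<in>S. c i * Poly_Mapping.lookup (?F i) (keyM i0))"
    by (simp add: lookup_sum lookup_scal)
  also have "\<dots> = (\<Sum>i\<in>S. if i = i0 then c i0 * Poly_Mapping.lookup (?F i0) (keyM i0) else 0)"
    by (rule sum.cong) (simp_all add: trm)
  also have "\<dots> = c i0 * Poly_Mapping.lookup (?F i0) (keyM i0)"
    using fin i0 by simp
  finally have z: "c i0 * Poly_Mapping.lookup (?F i0) (keyM i0) = 0" by simp
  obtain k where k: "shape (nn i0) (keyM i0) k (?F i0)" using shapeM by blast
  have "Poly_Mapping.lookup (?F i0) (keyM i0) = k"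
    using shape_lookup[OF k] by (simp add: dk_keyM)
  then show False using z k i0 by (simp add: shape_def)
qed

end


context fixes q :: "'k::field" assumes q0: "q \<noteq> 0" and q2: "q^2 \<noteq> 1" and q4: "q^4 \<noteq> 1"
begin

lemma ev_S1: "feval q (a2v q) (S1 q) = 0"
  apply (rule pm_eq4)
  apply (simp add: Id1[OF q0] feval_mult[OF q0] feval_diff feval_fsc feval_e1 ev_e3[OF q0 q2 q4]
      aX_def aY_def amul_single_single lookup_minus lookup_single when_def)
  apply (auto simp: q0 field_simps)
  done

lemma ev_S2: "feval q (a2v q) (S2 q) = 0"
  by (simp add: Id2[OF q0] feval_mult[OF q0] feval_diff feval_fsc feval_e2 ev_z[OF q0 q2 q4]
      aZ_def amul_central)

lemma Irel_ker: "f \<in> Irel q \<Longrightarrow> feval q (a2v q) f = 0"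
proof (induction f rule: Irel.induct)
  case zero then show ?case by simp
next
  case (gen r u v)
  then have "feval q (a2v q) r = 0" using ev_S1 ev_S2 by auto
  then show ?case by (simp add: feval_mult[OF q0])
next
  case (add a b) then show ?case by (simp add: feval_add)
qed

lemma ker_Irel: assumes "feval q (a2v q) f = 0" shows "f \<in> Irel q"
proof -
  obtain S c where S: "finite S" and cgf: "cg q f (\<Sum>i\<in>S. fsc (c i) * MMt q i)"
    using Sp_repr[OF Sp_all[OF q0]] by blast
  have "feval q (a2v q) (f - (\<Sum>i\<in>S. fsc (c i) * MMt q i)) = 0"
    using cgf Irel_ker unfolding cg_def by blast
  then have "(\<Sum>i\<in>S. amul q (Poly_Mapping.single (0,0,0,0) (c i)) (feval q (a2v q) (MMt q i))) = 0"
    using assms by (simp add: feval_diff feval_sum feval_mult[OF q0] feval_fsc)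
  then have "\<forall>i\<in>S. c i = 0" by (rule indep[OF q0 q2 q4 S])
  then have "(\<Sum>i\<in>S. fsc (c i) * MMt q i) = 0" by simp
  then show ?thesis using cgf unfolding cg_def by simp
qed

lemma central_ker: "feval q (a2v q) (x * f - f * x) = 0"
  if "feval q (a2v q) x = Poly_Mapping.single (0,0,m,n) 1"
  using that by (simp add: feval_diff feval_mult[OF q0] amul_central)

end

theorem mainTheorem11:
  fixes q :: "'k::field_char_0"
  assumes "alg_closed_field TYPE('k)"
    and "q \<noteq> 0"
    and "\<forall>n::nat. n > 0 \<longrightarrow> q ^ n \<noteq> 1"
  shows "(\<forall>f. fz q * f - f * fz q \<in> Irel q)
       \<and> (\<forall>f. fz' q * f - f * fz' q \<in> Irel q)
       \<and> (\<exists>a2. (\<forall>f. feval q a2 f = 0 \<longleftrightarrow> f \<in> Irel q)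
              \<and> feval q a2 (fe3 q) = aX
              \<and> feval q a2 fe1 = aY
              \<and> feval q a2 (fz q) = aZ
              \<and> feval q a2 (fz' q) = aZ'
              \<and> (\<exists>u. amul q u aX = aone \<and> amul q aX u = aone)
              \<and> (\<exists>u. amul q u aY = aone \<and> amul q aY u = aone))"
proof -
  have q0: "q \<noteq> 0" by (rule assms(2))
  have q2: "q^2 \<noteq> 1" using assms(3) by auto
  have q4: "q^4 \<noteq> 1" using assms(3) by auto
  have c1: "fz q * f - f * fz q \<in> Irel q" for f
    by (rule ker_Irel[OF q0 q2 q4], rule central_ker[OF q0 q2 q4]) (simp add: ev_z[OF q0 q2 q4] aZ_def)
  have c2: "fz' q * f - f * fz' q \<in> Irel q" for f
    by (rule ker_Irel[OF q0 q2 q4], rule central_ker[OF q0 q2 q4]) (simp add: ev_z'[OF q0 q2 q4] aZ'_def)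
  have iX: "amul q (Poly_Mapping.single (-1,0,0,0) 1) aX = aone \<and> amul q aX (Poly_Mapping.single (-1,0,0,0) 1) = aone"
    by (simp add: aX_def aone_def amul_single_single)
  have iY: "amul q (Poly_Mapping.single (0,-1,0,0) 1) aY = aone \<and> amul q aY (Poly_Mapping.single (0,-1,0,0) 1) = aone"
    by (simp add: aY_def aone_def amul_single_single)
  have k: "feval q (a2v q) f = 0 \<longleftrightarrow> f \<in> Irel q" for f
    using ker_Irel[OF q0 q2 q4] Irel_ker[OF q0 q2 q4] by blast
  show ?thesis
    using c1 c2 iX iY k ev_e3[OF q0 q2 q4] feval_e1 ev_z[OF q0 q2 q4] ev_z'[OF q0 q2 q4]
    by blast
qed


end
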